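(* Let $u,\phi_1,\dots,\phi_N$ solve the $n$-th KdV equation with self-consistent sources of degree $N$, let $\eta=-\frac12\alpha$, let $f_1,\dots,f_m$ satisfy the Lax pair $f_{j,xx}+(\lambda_{N+j}+u)f_j=0$, $f_{j,t}=Q^{(n,N)}f_j$ with spectral parameters $\lambda_{N+1},\dots,\lambda_{N+m}$ respectively, and let $\psi$ satisfy the Lax pair with spectral parameter $\lambda$. Define iterates by $f_j[0]=f_j$, $\psi[0]=\psi$ and, for $l\ge1$ and $g\in\{f_j,\psi\}$, $$g[l]=g[l-1]-\frac{f_l[l-1]}{1+\partial^{-1}(f_l[l-1]^2)}\,\partial^{-1}\big(f_l[l-1]\,g[l-1]\big).$$ Then for all integers $l,k$ with $1\le l\le m-1$ and $1\le k\le m-l$, $$W_1(f_{l+1}[l],\dots,f_{l+k}[l])=\frac{W_1(f_l[l-1],f_{l+1}[l-1],\dots,f_{l+k}[l-1])}{1+\partial^{-1}(f_l[l-1]^2)},$$ $$W_2(f_{l+1}[l],\dots,f_{l+k}[l],\psi[l])=\frac{W_2(f_l[l-1],f_{l+1}[l-1],\dots,f_{l+k}[l-1],\psi[l-1])}{1+\partial^{-1}(f_l[l-1]^2)}.$$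
   Context: Let $\partial=\partial/\partial x$ and $\partial^{-1}=\int_{-\infty}^x\cdot\,dx$; all functions of $(x,t)$ are smooth and decay as $x\to-\infty$ sufficiently fast that all integrals $\partial^{-1}(\cdot)$ appearing converge. For a potential $u(x,t)$ let $L=-\frac14\partial^2-u+\frac12\partial^{-1}u_x$, $b_0=0$, $b_1=1$, $b_{k+1}=Lb_k$ ($k\ge1$), $a_k=-\frac12 b_{k,x}$; write $b_k[u]$. Fix $n\ge0$, $t=t_n$, $A^{(n)}(u,\lambda)=\sum_{i=0}^{n+1}(a_i+b_i\partial)\lambda^{n+1-i}$. The $n$-th KdV equation with self-consistent sources of degree $N$ (constant $\alpha$, distinct constants $\lambda_j$) is $u_t=\partial\big[-2b_{n+2}[u]-2\alpha\sum_{j=1}^N\phi_j^2\big]$, $\phi_{j,xx}+(\lambda_j+u)\phi_j=0$. For a constant $\eta$ and spectral parameter $\lambda$, $Q^{(n,N)}\psi=A^{(n)}(u,\lambda)\psi+\eta\psi+\alpha\sum_{j=1}^N\phi_j\partial^{-1}(\phi_j\psi)$; the Lax pair with spectral parameter $\lambda$ is $\psi_{xx}+(\lambda+u)\psi=0$, $\psi_t=Q^{(n,N)}\psi$. The constants $\lambda_1,\dots,\lambda_{N+m}$ are distinct. For functions $g_1,\dots,g_k$: $W_1(g_1,\dots,g_k)=\det F$ with $F_{ij}=\delta_{ij}+\partial^{-1}(g_ig_j)$, $1\le i,j\le k$; and $W_2(g_1,\dots,g_k)=\det G$ with $G_{ij}=\delta_{ij}+\partial^{-1}(g_ig_j)$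 for $1\le i\le k-1$, $1\le j\le k$, and $G_{kj}=g_j$ for $1\le j\le k$. *)

theory Defs
  imports "HOL-Analysis.Analysis" "Jordan_Normal_Form.Determinant"
begin

type_synonym fn2 = "real \<Rightarrow> real \<Rightarrow> real"  (* functions of (x,t) *)

definition Dx :: "fn2 \<Rightarrow> fn2" where
  "Dx g = (\<lambda>x t. deriv (\<lambda>y. g y t) x)"

definition Dt :: "fn2 \<Rightarrow> fn2" where
  "Dt g = (\<lambda>x t. deriv (\<lambda>s. g x s) t)"

definition smooth2 :: "fn2 \<Rightarrow> bool" where
  "smooth2 g = (\<forall>ds :: bool list.
     (\<lambda>(x,t). (foldr (\<lambda>d h. if d then Dx h else Dt h) ds g) x t) differentiable_on UNIV)"

definition pinv :: "fn2 \<Rightarrow> fn2" where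
  "pinv g = (\<lambda>x t. LBINT s:{..x}. g s t)"

definition pinv_ok :: "fn2 \<Rightarrow> bool" where
  "pinv_ok h = (\<forall>x t. set_integrable lborel {..x} (\<lambda>s. h s t))"

definition decays :: "fn2 \<Rightarrow> bool" where
  "decays g = (\<forall>t. ((\<lambda>x. g x t) \<longlongrightarrow> 0) at_bot)"

definition mulf :: "fn2 \<Rightarrow> fn2 \<Rightarrow> fn2" where
  "mulf g h = (\<lambda>x t. g x t * h x t)"

definition Lop :: "fn2 \<Rightarrow> fn2 \<Rightarrow> fn2" where
  "Lop u g = (\<lambda>x t. - (1/4) * Dx (Dx g) x t - u x t * g x t
                     + (1/2) * pinv (mulf (Dx u) g) x t)"

fun bk :: "fn2 \<Rightarrow> nat \<Rightarrow> fn2" where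
  "bk u 0 = (\<lambda>x t. 0)"
| "bk u (Suc 0) = (\<lambda>x t. 1)"
| "bk u (Suc (Suc k)) = Lop u (bk u (Suc k))"

definition ak :: "fn2 \<Rightarrow> nat \<Rightarrow> fn2" where
  "ak u k = (\<lambda>x t. - (1/2) * Dx (bk u k) x t)"

definition Aop :: "nat \<Rightarrow> fn2 \<Rightarrow> real \<Rightarrow> fn2 \<Rightarrow> fn2" where
  "Aop n u lam psi = (\<lambda>x t. \<Sum>i\<le>n+1.
      (ak u i x t * psi x t + bk u i x t * Dx psi x t) * lam ^ (n + 1 - i))"

definition Qop :: "nat \<Rightarrow> nat \<Rightarrow> fn2 \<Rightarrow> (nat \<Rightarrow> fn2) \<Rightarrow> real \<Rightarrow> real \<Rightarrow> real \<Rightarrow> fn2 \<Rightarrow> fn2" where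
  "Qop n N u phi alpha eta lam psi = (\<lambda>x t.
      Aop n u lam psi x t + eta * psi x t
      + alpha * (\<Sum>j=1..N. phi j x t * pinv (mulf (phi j) psi) x t))"

definition kdv_sources :: "nat \<Rightarrow> nat \<Rightarrow> real \<Rightarrow> (nat \<Rightarrow> real) \<Rightarrow> fn2 \<Rightarrow> (nat \<Rightarrow> fn2) \<Rightarrow> bool" where
  "kdv_sources n N alpha lams u phi =
     ((\<forall>x t. Dt u x t = Dx (\<lambda>x t. - 2 * bk u (n+2) x t - 2 * alpha * (\<Sum>j=1..N. (phi j x t)^2)) x t)
      \<and> (\<forall>j\<in>{1..N}. \<forall>x t. Dx (Dx (phi j)) x t + (lams j + u x t) * phi j x t = 0))"

definition lax_pair :: "nat \<Rightarrow> nat \<Rightarrow> fn2 \<Rightarrow> (nat \<Rightarrow> fn2) \<Rightarrow> real \<Rightarrow> real \<Rightarrow> real \<Rightarrow> fn2 \<Rightarrow> bool" where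
  "lax_pair n N u phi alpha eta lam psi =
     ((\<forall>x t. Dx (Dx psi) x t + (lam + u x t) * psi x t = 0)
      \<and> (\<forall>x t. Dt psi x t = Qop n N u phi alpha eta lam psi x t))"

definition dstep :: "fn2 \<Rightarrow> fn2 \<Rightarrow> fn2" where
  "dstep h g = (\<lambda>x t. g x t - h x t / (1 + pinv (mulf h h) x t) * pinv (mulf h g) x t)"

text \<open>Iterates: iter f l g = g[l], with f_l[l-1] = iter f (l-1) (f l).\<close>
fun iter :: "(nat \<Rightarrow> fn2) \<Rightarrow> nat \<Rightarrow> fn2 \<Rightarrow> fn2" where
  "iter f 0 g = g"
| "iter f (Suc l) g = dstep (iter f l (f (Suc l))) (iter f l g)"

definition W1 :: "fn2 list \<Rightarrow> fn2" where
  "W1 gs = (\<lambda>x t. det (mat (length gs) (length gs)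
      (\<lambda>(i,j). (if i = j then 1 else 0) + pinv (mulf (gs!i) (gs!j)) x t)))"

definition W2 :: "fn2 list \<Rightarrow> fn2" where
  "W2 gs = (\<lambda>x t. det (mat (length gs) (length gs)
      (\<lambda>(i,j). if i + 1 < length gs
               then (if i = j then 1 else 0) + pinv (mulf (gs!i) (gs!j)) x t
               else (gs!j) x t)))"

end

theory Submission
  imports Defs
begin


lemma lim0:
  fixes F :: "real \<Rightarrow> real"
  assumes int: "set_integrable lborel {..b} F"
  shows "((\<lambda>x. LBINT s:{..x}. F s) \<longlongrightarrow> 0) at_bot"
proof (rule tendsto_at_botI_sequentially)
  fix X :: "nat \<Rightarrow> real" assume X: "filterlim X at_bot sequentially"
  have ev: "eventually (\<lambda>n. X n \<le> b) sequentially"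
    by (rule filterlim_at_bot[THEN iffD1, OF X, rule_format])
  have "(\<lambda>n. LINT x|lborel. indicat_real {..min (X n) b} x *\<^sub>R F x) \<longlonglongrightarrow> (LINT (x::real)|lborel. (0::real))"
  proof (rule integral_dominated_convergence[where w="\<lambda>x. indicat_real {..b} x *\<^sub>R norm (F x)"])
    show "integrable lborel (\<lambda>x. indicat_real {..b} x *\<^sub>R norm (F x))"
      using integrable_norm[OF int[unfolded set_integrable_def]] by (simp add: abs_mult)
    show "AE x in lborel. (\<lambda>n. indicat_real {..min (X n) b} x *\<^sub>R F x) \<longlonglongrightarrow> 0"
    proof
      fix x
      have "eventually (\<lambda>n. X n < x) sequentially"
        by (rule filterlim_at_bot_dense[THEN iffD1, OF X, rule_format])
      then have "eventually (\<lambda>n. indicat_real {..min (X n) b} x *\<^sub>R F x = 0) sequentially"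
        by (rule eventually_mono) (auto simp: indicator_def)
      then show "(\<lambda>n. indicat_real {..min (X n) b} x *\<^sub>R F x) \<longlonglongrightarrow> 0"
        by (rule tendsto_eventually)
    qed
    fix n show "AE x in lborel. norm (indicat_real {..min (X n) b} x *\<^sub>R F x) \<le>
                             indicat_real {..b} x *\<^sub>R norm (F x)"
      by (rule AE_I2) (auto simp: indicator_def)
  next
    show "(\<lambda>x. 0::real) \<in> borel_measurable lborel" by simp
  next
    fix n :: nat
    have "set_integrable lborel {..min (X n) b} F"
      by (rule set_integrable_subset[OF int]) auto
    thus "(\<lambda>x. indicat_real {..min (X n) b} x *\<^sub>R F x) \<in> borel_measurable lborel"
      by (simp add: set_integrable_def)
  qed
  then have "(\<lambda>n. LBINT s:{..min (X n) b}. F s) \<longlonglongrightarrow> 0"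
    by (simp add: set_lebesgue_integral_def)
  then show "(\<lambda>n. LBINT s:{..X n}. F s) \<longlonglongrightarrow> 0"
    apply (rule Lim_transform_eventually)
    using ev by (auto elim!: eventually_mono simp: min_def)
qed

lemma ftc:
  fixes F :: "real \<Rightarrow> real"
  assumes cont: "continuous_on UNIV F" and int: "\<And>x. set_integrable lborel {..x} F"
  shows "((\<lambda>x. LBINT s:{..x}. F s) has_real_derivative F x0) (at x0)"
proof -
  define a where "a = x0 - 1"
  define b where "b = x0 + 1"
  have eq: "(LBINT s:{..y}. F s) = (LBINT s:{..a}. F s) + integral {a..y} F" if "a \<le> y" for y
  proof -
    have i2: "set_integrable lborel {a..y} F"
      by (rule set_integrable_subset[OF int[of y]]) auto
    have "{..y} = {..a} \<union> {a..y}" using that by auto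
    then have "(LBINT s:{..y}. F s) = (LBINT s:{..a}. F s) + (LBINT s:{a..y}. F s)"
    proof -
      have AE: "AE x in lborel. \<not> (x \<in> {..a} \<and> x \<in> {a..y})"
        using AE_lborel_singleton[of a] by (auto elim!: eventually_mono)
      have "(LBINT s:{..a} \<union> {a..y}. F s) = (LBINT s:{..a}. F s) + (LBINT s:{a..y}. F s)"
        by (rule set_integral_Un_AE[OF AE _ _ int[of a] i2]) auto
      then show ?thesis by (subst \<open>{..y} = _\<close>)
    qed
    also have "(LBINT s:{a..y}. F s) = integral {a..y} F"
      by (rule set_borel_integral_eq_integral(2)[OF i2])
    finally show ?thesis .
  qed
  have "((\<lambda>y. integral {a..y} F) has_real_derivative F x0) (at x0 within {a..b})"
    by (rule integral_has_real_derivative) (auto intro: continuous_on_subset[OF cont] simp: a_def b_def)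
  then have d0: "((\<lambda>y. integral {a..y} F) has_real_derivative F x0) (at x0)"
    by (simp add: at_within_Icc_at a_def b_def)
  have "((\<lambda>y. (LBINT s:{..a}. F s) + integral {a..y} F) has_real_derivative F x0) (at x0)"
    using DERIV_add[OF DERIV_const[of "LBINT s:{..a}. F s" "at x0"] d0] by simp
  then show ?thesis
  proof (rule has_field_derivative_transform_within_open[where S="{a<..}"])
    show "open {a<..}" by simp
    show "x0 \<in> {a<..}" by (simp add: a_def)
    fix y assume "y \<in> {a<..}"
    then have "a \<le> y" by simp
    then show "(LBINT s:{..a}. F s) + integral {a..y} F = (LBINT s:{..y}. F s)"
      by (rule eq[symmetric])
  qed
qed

lemma nonneg_sq:
  fixes F :: "real \<Rightarrow> real"
  shows "0 \<le> (LBINT s:S. F s * F s)"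
  unfolding set_lebesgue_integral_def
  by (rule integral_nonneg_AE) (auto split: split_indicator)


definition contx :: "fn2 \<Rightarrow> bool" where
  "contx g = (\<forall>t. continuous_on UNIV (\<lambda>x. g x t))"

lemma mulf_comm: "mulf g h = mulf h g"
  by (auto simp: mulf_def fun_eq_iff)

lemma pinv_has_deriv:
  assumes "contx a" "contx b" "pinv_ok (mulf a b)"
  shows "((\<lambda>x. pinv (mulf a b) x t) has_real_derivative a x t * b x t) (at x)"
proof -
  have c: "continuous_on UNIV (\<lambda>s. a s t * b s t)"
    using assms(1,2) unfolding contx_def by (auto intro!: continuous_intros)
  have i: "\<And>y. set_integrable lborel {..y} (\<lambda>s. a s t * b s t)"
    using assms(3) unfolding pinv_ok_def mulf_def by auto
  show ?thesis using ftc[OF c i, of x] unfolding pinv_def mulf_def by simp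
qed

lemma pinv_cont:
  assumes "contx a" "contx b" "pinv_ok (mulf a b)"
  shows "continuous_on UNIV (\<lambda>x. pinv (mulf a b) x t)"
  by (rule continuous_at_imp_continuous_on) (auto intro: DERIV_isCont[OF pinv_has_deriv[OF assms]])

lemma pinv_lim:
  assumes "pinv_ok (mulf a b)"
  shows "((\<lambda>x. pinv (mulf a b) x t) \<longlongrightarrow> 0) at_bot"
proof -
  have i: "set_integrable lborel {..0} (\<lambda>s. a s t * b s t)"
    using assms unfolding pinv_ok_def mulf_def by auto
  show ?thesis using lim0[OF i] unfolding pinv_def mulf_def by simp
qed

lemma D_ge1: "1 \<le> 1 + pinv (mulf h h) x t"
  using nonneg_sq[of "{..x}" "\<lambda>s. h s t"] unfolding pinv_def mulf_def by simp

lemma contx_dstep: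
  assumes "contx h" "contx g" "pinv_ok (mulf h h)" "pinv_ok (mulf h g)"
  shows "contx (dstep h g)"
  unfolding contx_def dstep_def
proof
  fix t
  have c1: "continuous_on UNIV (\<lambda>x. pinv (mulf h h) x t)" by (rule pinv_cont[OF assms(1,1,3)])
  have c2: "continuous_on UNIV (\<lambda>x. pinv (mulf h g) x t)" by (rule pinv_cont[OF assms(1,2,4)])
  have ch: "continuous_on UNIV (\<lambda>x. h x t)" and cg: "continuous_on UNIV (\<lambda>x. g x t)"
    using assms(1,2) unfolding contx_def by auto
  have nz: "1 + pinv (mulf h h) x t \<noteq> 0" for x using D_ge1[of h x t] by linarith
  show "continuous_on UNIV (\<lambda>x. g x t - h x t / (1 + pinv (mulf h h) x t) * pinv (mulf h g) x t)"
    by (intro continuous_intros c1 c2 ch cg) (simp add: nz)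
qed

lemma key:
  assumes ch: "contx h" and c1: "contx g1" and c2: "contx g2"
    and ihh: "pinv_ok (mulf h h)" and ih1: "pinv_ok (mulf h g1)" and ih2: "pinv_ok (mulf h g2)"
    and i12: "pinv_ok (mulf g1 g2)" and i12': "pinv_ok (mulf (dstep h g1) (dstep h g2))"
  shows "pinv (mulf (dstep h g1) (dstep h g2)) x t
     = pinv (mulf g1 g2) x t - pinv (mulf h g1) x t * pinv (mulf h g2) x t / (1 + pinv (mulf h h) x t)"
proof -
  define D where "D = (\<lambda>y. 1 + pinv (mulf h h) y t)"
  define A1 where "A1 = (\<lambda>y. pinv (mulf h g1) y t)"
  define A2 where "A2 = (\<lambda>y. pinv (mulf h g2) y t)"
  define P where "P = (\<lambda>y. pinv (mulf g1 g2) y t)"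
  define P' where "P' = (\<lambda>y. pinv (mulf (dstep h g1) (dstep h g2)) y t)"
  define Phi where "Phi = (\<lambda>y. P' y - P y + A1 y * A2 y / D y)"
  have Dnz: "D y \<noteq> 0" for y unfolding D_def using D_ge1[of h y t] by linarith
  have c1': "contx (dstep h g1)" by (rule contx_dstep[OF ch c1 ihh ih1])
  have c2': "contx (dstep h g2)" by (rule contx_dstep[OF ch c2 ihh ih2])
  have der: "(Phi has_real_derivative 0) (at y)" for y
  proof -
    have dP': "(P' has_real_derivative dstep h g1 y t * dstep h g2 y t) (at y)"
      unfolding P'_def by (rule pinv_has_deriv[OF c1' c2' i12'])
    have dP: "(P has_real_derivative g1 y t * g2 y t) (at y)"
      unfolding P_def by (rule pinv_has_deriv[OF c1 c2 i12])
    have dA1: "(A1 has_real_derivative h y t * g1 y t) (at y)"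
      unfolding A1_def by (rule pinv_has_deriv[OF ch c1 ih1])
    have dA2: "(A2 has_real_derivative h y t * g2 y t) (at y)"
      unfolding A2_def by (rule pinv_has_deriv[OF ch c2 ih2])
    have dD0: "((\<lambda>y. pinv (mulf h h) y t) has_real_derivative h y t * h y t) (at y)"
      by (rule pinv_has_deriv[OF ch ch ihh])
    have dD: "(D has_real_derivative h y t * h y t) (at y)"
      unfolding D_def using DERIV_add[OF DERIV_const dD0] by simp
    have dQ: "((\<lambda>y. A1 y * A2 y / D y) has_real_derivative
       ((h y t * g1 y t * A2 y + h y t * g2 y t * A1 y) * D y - A1 y * A2 y * (h y t * h y t)) / (D y * D y)) (at y)"
      by (rule DERIV_divide[OF DERIV_mult[OF dA1 dA2] dD Dnz])
    have "(Phi has_real_derivative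
       (dstep h g1 y t * dstep h g2 y t - g1 y t * g2 y t +
       ((h y t * g1 y t * A2 y + h y t * g2 y t * A1 y) * D y - A1 y * A2 y * (h y t * h y t)) / (D y * D y))) (at y)"
      unfolding Phi_def by (rule DERIV_add[OF DERIV_diff[OF dP' dP] dQ])
    moreover have "dstep h g1 y t * dstep h g2 y t - g1 y t * g2 y t +
       ((h y t * g1 y t * A2 y + h y t * g2 y t * A1 y) * D y - A1 y * A2 y * (h y t * h y t)) / (D y * D y) = 0"
    proof -
      have e1: "dstep h g1 y t = g1 y t - h y t / D y * A1 y" by (simp add: dstep_def D_def A1_def)
      have e2: "dstep h g2 y t = g2 y t - h y t / D y * A2 y" by (simp add: dstep_def D_def A2_def)
      show ?thesis unfolding e1 e2 using Dnz[of y]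
        by (simp add: field_simps)
    qed
    ultimately show ?thesis by simp
  qed
  have const: "\<And>y. Phi y = Phi x" using der by (metis DERIV_isconst_all)
  have lim: "(Phi \<longlongrightarrow> 0 - 0 + 0 * 0 / (1 + 0)) at_bot"
    unfolding Phi_def P'_def P_def A1_def A2_def D_def
    by (intro tendsto_intros pinv_lim i12' i12 ih1 ih2 ihh) simp
  have "(Phi \<longlongrightarrow> Phi x) at_bot"
    by (rule Lim_transform_eventually[OF tendsto_const], intro always_eventually allI, rule const[symmetric])
  then have "Phi x = 0 - 0 + 0 * 0 / (1 + 0)"
    using lim by (rule tendsto_unique[OF trivial_limit_at_bot_linorder])
  then have "P' x = P x - A1 x * A2 x / D x" unfolding Phi_def by simp
  then show ?thesis unfolding P'_def P_def A1_def A2_def D_def .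
qed



lemma schur:
  fixes M :: "real mat"
  assumes M: "M \<in> carrier_mat (Suc K) (Suc K)" and nz: "M $$ (0,0) \<noteq> 0"
  shows "det M = M $$ (0,0) * det (mat K K (\<lambda>(i,j). M $$ (Suc i, Suc j) - M $$ (Suc i, 0) * M $$ (0, Suc j) / M $$ (0,0)))"
proof -
  define c where "c = M $$ (0,0)"
  define N where "N = mat (Suc K) (Suc K) (\<lambda>(i,j). if j = 0 then M $$ (i,0) else if i = 0 then 0 else M $$ (i,j) - M $$ (i,0) * M $$ (0,j) / c)"
  define C where "C = mat (Suc K) (Suc K) (\<lambda>(i,j). (if i = j then 1 else 0) + (if i = 0 \<and> j \<noteq> 0 then M $$ (0,j) / c else 0))"
  have Nc: "N \<in> carrier_mat (Suc K) (Suc K)" and Cc: "C \<in> carrier_mat (Suc K) (Suc K)"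
    by (auto simp: N_def C_def)
  have NC: "M = N * C"
  proof (rule eq_matI)
    fix i j assume i: "i < dim_row (N*C)" and j: "j < dim_col (N*C)"
    then have i: "i < Suc K" and j: "j < Suc K" by (auto simp: N_def C_def)
    have "(N * C) $$ (i,j) = (\<Sum>k\<in>{0..<Suc K}. N $$ (i,k) * C $$ (k,j))"
      using i j Nc Cc by (simp add: scalar_prod_def)
    also have "\<dots> = (\<Sum>k\<in>{0..<Suc K}. N $$ (i,k) * (if k = j then 1 else 0))
        + (\<Sum>k\<in>{0..<Suc K}. N $$ (i,k) * (if k = 0 \<and> j \<noteq> 0 then M $$ (0,j) / c else 0))"
      using j by (simp add: C_def distrib_left sum.distrib)
    also have "\<dots> = N $$ (i,j) + (if j \<noteq> 0 then N $$ (i,0) * M $$ (0,j) / c else 0)"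
      using j by (simp add: if_distrib[where f="\<lambda>x. _ * x"] sum.delta cong: if_cong)
    also have "\<dots> = M $$ (i,j)"
      using i j nz by (auto simp: N_def c_def)
    finally show "M $$ (i,j) = (N * C) $$ (i,j)" by simp
  qed (use M Nc Cc in auto)
  have "upper_triangular C" by (auto simp: upper_triangular_def C_def)
  then have "det C = prod_list (diag_mat C)" using det_upper_triangular Cc by blast
  also have "diag_mat C = map (\<lambda>i. 1) [0..<Suc K]"
    unfolding diag_mat_def by (rule map_cong) (auto simp: C_def)
  finally have dC: "det C = 1" by (simp add: prod_list_replicate map_replicate_const)
  have "det N = (\<Sum>j<Suc K. N $$ (0,j) * cofactor N 0 j)"
    by (rule laplace_expansion_row[OF Nc]) simp
  also have "\<dots> = N $$ (0,0) * cofactor N 0 0"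
    by (simp add: sum.lessThan_Suc_shift N_def del: sum.lessThan_Suc)
  also have "\<dots> = c * det (mat_delete N 0 0)"
    by (simp add: cofactor_def N_def c_def)
  also have "mat_delete N 0 0 = mat K K (\<lambda>(i,j). M $$ (Suc i, Suc j) - M $$ (Suc i, 0) * M $$ (0, Suc j) / c)"
    by (rule eq_matI) (auto simp: mat_delete_def N_def)
  finally have dN: "det N = c * det (mat K K (\<lambda>(i,j). M $$ (Suc i, Suc j) - M $$ (Suc i, 0) * M $$ (0, Suc j) / c))" .
  show ?thesis using det_mult[OF Nc Cc] NC dC dN by (simp add: c_def)
qed



lemma W1_step:
  fixes G :: "fn2 list" and h :: fn2
  assumes D: "1 + pinv (mulf h h) x t \<noteq> 0"
    and idt: "\<And>a b. a \<in> set G \<Longrightarrow> b \<in> set G \<Longrightarrow> pinv (mulf (dstep h a) (dstep h b)) x t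
       = pinv (mulf a b) x t - pinv (mulf h a) x t * pinv (mulf h b) x t / (1 + pinv (mulf h h) x t)"
  shows "W1 (map (dstep h) G) x t = W1 (h # G) x t / (1 + pinv (mulf h h) x t)"
proof -
  define K where "K = length G"
  define M where "M = mat (Suc K) (Suc K) (\<lambda>(i,j). (if i = j then 1 else 0) + pinv (mulf ((h#G)!i) ((h#G)!j)) x t)"
  have W: "W1 (h # G) x t = det M" unfolding W1_def M_def K_def by simp
  have M00: "M $$ (0,0) = 1 + pinv (mulf h h) x t" by (simp add: M_def)
  have "det M = M $$ (0,0) * det (mat K K (\<lambda>(i,j). M $$ (Suc i, Suc j) - M $$ (Suc i, 0) * M $$ (0, Suc j) / M $$ (0,0)))"
    by (rule schur) (auto simp: M_def D)
  also have "mat K K (\<lambda>(i,j). M $$ (Suc i, Suc j) - M $$ (Suc i, 0) * M $$ (0, Suc j) / M $$ (0,0))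
     = mat K K (\<lambda>(i,j). (if i = j then 1 else 0) + pinv (mulf (map (dstep h) G ! i) (map (dstep h) G ! j)) x t)"
  proof (rule eq_matI)
    fix i j assume "i < dim_row (mat K K (\<lambda>(i,j). (if i = j then 1 else 0) + pinv (mulf (map (dstep h) G ! i) (map (dstep h) G ! j)) x t))"
      "j < dim_col (mat K K (\<lambda>(i,j). (if i = j then 1 else 0) + pinv (mulf (map (dstep h) G ! i) (map (dstep h) G ! j)) x t))"
    then have ij: "i < K" "j < K" by auto
    then have "G ! i \<in> set G" "G ! j \<in> set G" by (auto simp: K_def)
    from idt[OF this] show "mat K K (\<lambda>(i,j). M $$ (Suc i, Suc j) - M $$ (Suc i, 0) * M $$ (0, Suc j) / M $$ (0,0)) $$ (i,j)
       = mat K K (\<lambda>(i,j). (if i = j then 1 else 0) + pinv (mulf (map (dstep h) G ! i) (map (dstep h) G ! j)) x t) $$ (i,j)"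
      using ij by (simp add: M_def K_def mulf_comm[of "G ! i" h])
  qed auto
  finally show ?thesis unfolding W M00 using D unfolding W1_def by (simp add: K_def)
qed

lemma W2_step:
  fixes L :: "fn2 list" and h :: fn2
  assumes D: "1 + pinv (mulf h h) x t \<noteq> 0" and ne: "L \<noteq> []"
    and idt: "\<And>a b. a \<in> set L \<Longrightarrow> b \<in> set L \<Longrightarrow> pinv (mulf (dstep h a) (dstep h b)) x t
       = pinv (mulf a b) x t - pinv (mulf h a) x t * pinv (mulf h b) x t / (1 + pinv (mulf h h) x t)"
  shows "W2 (map (dstep h) L) x t = W2 (h # L) x t / (1 + pinv (mulf h h) x t)"
proof -
  define K where "K = length L"
  have K1: "1 \<le> K" using ne by (cases L) (auto simp: K_def)
  define M where "M = mat (Suc K) (Suc K) (\<lambda>(i,j). if i + 1 < Suc K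
               then (if i = j then 1 else 0) + pinv (mulf ((h#L)!i) ((h#L)!j)) x t
               else ((h#L)!j) x t)"
  define S where "S = mat K K (\<lambda>(i,j). if i + 1 < K
               then (if i = j then 1 else 0) + pinv (mulf (map (dstep h) L!i) (map (dstep h) L!j)) x t
               else (map (dstep h) L!j) x t)"
  have W: "W2 (h # L) x t = det M" unfolding W2_def M_def K_def by simp
  have W': "W2 (map (dstep h) L) x t = det S" unfolding W2_def S_def K_def by simp
  have M00: "M $$ (0,0) = 1 + pinv (mulf h h) x t" using K1 by (simp add: M_def)
  have "det M = M $$ (0,0) * det (mat K K (\<lambda>(i,j). M $$ (Suc i, Suc j) - M $$ (Suc i, 0) * M $$ (0, Suc j) / M $$ (0,0)))"
    by (rule schur) (use K1 in \<open>auto simp: M00 D M_def\<close>)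
  also have "mat K K (\<lambda>(i,j). M $$ (Suc i, Suc j) - M $$ (Suc i, 0) * M $$ (0, Suc j) / M $$ (0,0)) = S"
  proof (rule eq_matI)
    fix i j assume "i < dim_row S" "j < dim_col S"
    then have ij: "i < K" "j < K" by (auto simp: S_def)
    then have "L ! i \<in> set L" "L ! j \<in> set L" by (auto simp: K_def)
    note e = idt[OF this]
    have M0j: "M $$ (0, Suc j) = pinv (mulf h (L!j)) x t" using ij K1 by (simp add: M_def)
    show "mat K K (\<lambda>(i,j). M $$ (Suc i, Suc j) - M $$ (Suc i, 0) * M $$ (0, Suc j) / M $$ (0,0)) $$ (i,j) = S $$ (i,j)"
    proof (cases "i + 1 < K")
      case True
      then show ?thesis using ij e ne unfolding M00 M0j
        by (simp add: M_def S_def K_def mulf_comm[of "L ! i" h])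
    next
      case False
      then show ?thesis using ij ne unfolding M00 M0j
        by (simp add: M_def S_def K_def dstep_def)
    qed
  qed (auto simp: S_def)
  finally show ?thesis unfolding W W' M00 using D by simp
qed


theorem lemma5p1:
  fixes n N m :: nat and alpha eta lam :: real and lams :: "nat \<Rightarrow> real"
    and u psi :: fn2 and phi f :: "nat \<Rightarrow> fn2"
  assumes distinct: "inj_on lams {1..N+m}"
    and eta: "eta = - (1/2) * alpha"
    and kdv: "kdv_sources n N alpha lams u phi"
    and laxf: "\<forall>j\<in>{1..m}. lax_pair n N u phi alpha eta (lams (N+j)) (f j)"
    and laxpsi: "lax_pair n N u phi alpha eta lam psi"
    and smooth: "smooth2 u" "\<forall>j\<in>{1..N}. smooth2 (phi j)" "\<forall>j\<in>{1..m}. smooth2 (f j)" "smooth2 psi"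
    and decay: "decays u" "\<forall>j\<in>{1..N}. decays (phi j)" "\<forall>j\<in>{1..m}. decays (f j)" "decays psi"
    and conv_b: "\<forall>k\<le>n+1. pinv_ok (mulf (Dx u) (bk u k))"
    and conv_Q: "\<forall>i\<in>{1..N}. pinv_ok (mulf (phi i) psi) \<and> (\<forall>j\<in>{1..m}. pinv_ok (mulf (phi i) (f j)))"
    and conv_it: "\<forall>l\<le>m. \<forall>i\<in>{1..m}. pinv_ok (mulf (iter f l psi) (iter f l psi))
                   \<and> pinv_ok (mulf (iter f l (f i)) (iter f l psi))
                   \<and> (\<forall>j\<in>{1..m}. pinv_ok (mulf (iter f l (f i)) (iter f l (f j))))"
  shows "\<forall>l k. 1 \<le> l \<and> l \<le> m - 1 \<and> 1 \<le> k \<and> k \<le> m - l \<longrightarrow>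
     (\<forall>x t.
       W1 (map (\<lambda>j. iter f l (f j)) [l+1..<l+k+1]) x t
         = W1 (map (\<lambda>j. iter f (l-1) (f j)) [l..<l+k+1]) x t
           / (1 + pinv (mulf (iter f (l-1) (f l)) (iter f (l-1) (f l))) x t)
     \<and> W2 (map (\<lambda>j. iter f l (f j)) [l+1..<l+k+1] @ [iter f l psi]) x t
         = W2 (map (\<lambda>j. iter f (l-1) (f j)) [l..<l+k+1] @ [iter f (l-1) psi]) x t
           / (1 + pinv (mulf (iter f (l-1) (f l)) (iter f (l-1) (f l))) x t))"
  proof (rule allI, rule allI, rule impI)
  fix l k assume lk: "1 \<le> l \<and> l \<le> m - 1 \<and> 1 \<le> k \<and> k \<le> m - l"
  obtain l0 where l0: "l = Suc l0" using lk by (cases l) auto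
  have lkm: "l + k \<le> m" "l \<le> m" "l0 \<le> m" using lk l0 by auto
  define S where "S = (\<lambda>l'. (\<lambda>j. iter f l' (f j)) ` {1..m} \<union> {iter f l' psi})"
  have okS: "pinv_ok (mulf a b)" if "l' \<le> m" "a \<in> S l'" "b \<in> S l'" for l' a b
  proof -
    have c: "\<forall>i\<in>{1..m}. pinv_ok (mulf (iter f l' psi) (iter f l' psi))
                   \<and> pinv_ok (mulf (iter f l' (f i)) (iter f l' psi))
                   \<and> (\<forall>j\<in>{1..m}. pinv_ok (mulf (iter f l' (f i)) (iter f l' (f j))))"
      by (rule spec[OF conv_it, THEN mp, OF that(1)])
    have m1: "1 \<in> {1..m}" using lk by auto
    have pp: "pinv_ok (mulf (iter f l' psi) (iter f l' psi))" using c m1 by blast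
    have fp: "pinv_ok (mulf (iter f l' (f i)) (iter f l' psi))" if "i \<in> {1..m}" for i
      using c that by blast
    have ff: "pinv_ok (mulf (iter f l' (f i)) (iter f l' (f j)))" if "i \<in> {1..m}" "j \<in> {1..m}" for i j
      using c that by blast
    have pf: "pinv_ok (mulf (iter f l' psi) (iter f l' (f i)))" if "i \<in> {1..m}" for i
      using fp[OF that] by (simp add: mulf_comm)
    from that(2) have "a = iter f l' psi \<or> (\<exists>i\<in>{1..m}. a = iter f l' (f i))" unfolding S_def by blast
    moreover from that(3) have "b = iter f l' psi \<or> (\<exists>i\<in>{1..m}. b = iter f l' (f i))" unfolding S_def by blast
    ultimately show ?thesis using pp fp ff pf by blast
  qed
  have sc: "contx g" if "smooth2 g" for g
  proof -
    have "(\<lambda>(x,t). g x t) differentiable_on UNIV"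
      using that[unfolded smooth2_def, rule_format, of "[]"] by simp
    then have c: "continuous_on UNIV (\<lambda>(x,t). g x t)" by (rule differentiable_imp_continuous_on)
    show ?thesis unfolding contx_def
    proof
      fix t
      have "continuous_on UNIV ((\<lambda>(x,t). g x t) \<circ> (\<lambda>x. (x,t)))"
        by (rule continuous_on_compose[OF _ continuous_on_subset[OF c]]) (auto intro!: continuous_intros)
      then show "continuous_on UNIV (\<lambda>x. g x t)" by (simp add: o_def)
    qed
  qed
  have contall: "l' \<le> m \<Longrightarrow> (\<forall>i\<in>{1..m}. contx (iter f l' (f i))) \<and> contx (iter f l' psi)" for l'
  proof (induction l')
    case 0
    then show ?case using smooth(3,4) sc by auto
  next
    case (Suc l')
    then have IH: "(\<forall>i\<in>{1..m}. contx (iter f l' (f i))) \<and> contx (iter f l' psi)"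
      and le: "l' \<le> m" "Suc l' \<in> {1..m}" by auto
    define H where "H = iter f l' (f (Suc l'))"
    have HS: "H \<in> S l'" unfolding H_def S_def using le by auto
    have cH: "contx H" using IH le unfolding H_def by auto
    have "\<forall>i\<in>{1..m}. contx (dstep H (iter f l' (f i)))"
    proof
      fix i assume i: "i \<in> {1..m}"
      have "iter f l' (f i) \<in> S l'" using i unfolding S_def by auto
      then show "contx (dstep H (iter f l' (f i)))"
        using contx_dstep[OF cH _ okS[OF le(1) HS HS] okS[OF le(1) HS]] IH i by auto
    qed
    moreover have "contx (dstep H (iter f l' psi))"
    proof -
      have "iter f l' psi \<in> S l'" unfolding S_def by auto
      then show ?thesis using contx_dstep[OF cH _ okS[OF le(1) HS HS] okS[OF le(1) HS]] IH by auto
    qed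
    ultimately show ?case unfolding H_def by simp
  qed
  define h where "h = iter f l0 (f l)"
  have lm: "l \<in> {1..m}" using lk by auto
  have hS: "h \<in> S l0" unfolding h_def S_def using lm by auto
  have cS: "contx a" if "a \<in> S l0" for a
    using that contall[OF lkm(3)] unfolding S_def by auto
  have dS: "dstep h a \<in> S l" if "a \<in> S l0" for a
    using that unfolding S_def h_def l0 by auto
  have okS': "pinv_ok (mulf (dstep h a) (dstep h b))" if "a \<in> S l0" "b \<in> S l0" for a b
    by (rule okS[OF lkm(2) dS[OF that(1)] dS[OF that(2)]])
  have idt: "pinv (mulf (dstep h a) (dstep h b)) x t
     = pinv (mulf a b) x t - pinv (mulf h a) x t * pinv (mulf h b) x t / (1 + pinv (mulf h h) x t)"
    if "a \<in> S l0" "b \<in> S l0" for a b x t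
    by (rule key[OF cS[OF hS] cS[OF that(1)] cS[OF that(2)] okS[OF lkm(3) hS hS]
          okS[OF lkm(3) hS that(1)] okS[OF lkm(3) hS that(2)] okS[OF lkm(3) that] okS'[OF that]])
  define G where "G = map (\<lambda>j. iter f l0 (f j)) [l+1..<l+k+1]"
  have GS: "set G \<subseteq> S l0" unfolding G_def S_def using lkm by auto
  have eq1: "map (\<lambda>j. iter f l (f j)) [l+1..<l+k+1] = map (dstep h) G"
    unfolding G_def h_def l0 by simp
  have ul: "[l..<l+k+1] = l # [l+1..<l+k+1]" using upt_conv_Cons[of l "l+k+1"] by simp
  have eq2: "map (\<lambda>j. iter f (l-1) (f j)) [l..<l+k+1] = h # G"
    unfolding ul G_def h_def using l0 by simp
  have eqpsi: "iter f l psi = dstep h (iter f (l-1) psi)" unfolding h_def l0 by simp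
  have psiS: "iter f l0 psi \<in> S l0" unfolding S_def by auto
  show "\<forall>x t.
       W1 (map (\<lambda>j. iter f l (f j)) [l+1..<l+k+1]) x t
         = W1 (map (\<lambda>j. iter f (l-1) (f j)) [l..<l+k+1]) x t
           / (1 + pinv (mulf (iter f (l-1) (f l)) (iter f (l-1) (f l))) x t)
     \<and> W2 (map (\<lambda>j. iter f l (f j)) [l+1..<l+k+1] @ [iter f l psi]) x t
         = W2 (map (\<lambda>j. iter f (l-1) (f j)) [l..<l+k+1] @ [iter f (l-1) psi]) x t
           / (1 + pinv (mulf (iter f (l-1) (f l)) (iter f (l-1) (f l))) x t)"
  proof (intro allI conjI)
    fix x t
    have hh: "iter f (l-1) (f l) = h" unfolding h_def l0 by simp
    have D: "1 + pinv (mulf h h) x t \<noteq> 0" using D_ge1[of h x t] by linarith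
    show "W1 (map (\<lambda>j. iter f l (f j)) [l+1..<l+k+1]) x t
         = W1 (map (\<lambda>j. iter f (l-1) (f j)) [l..<l+k+1]) x t
           / (1 + pinv (mulf (iter f (l-1) (f l)) (iter f (l-1) (f l))) x t)"
      unfolding eq1 eq2 hh
      by (rule W1_step[OF D]) (use GS idt in blast)
    have eq3: "map (\<lambda>j. iter f l (f j)) [l+1..<l+k+1] @ [iter f l psi] = map (dstep h) (G @ [iter f l0 psi])"
      using eq1 eqpsi l0 by simp
    have eq4: "map (\<lambda>j. iter f (l-1) (f j)) [l..<l+k+1] @ [iter f (l-1) psi] = h # (G @ [iter f l0 psi])"
      using eq2 l0 by simp
    show "W2 (map (\<lambda>j. iter f l (f j)) [l+1..<l+k+1] @ [iter f l psi]) x t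
         = W2 (map (\<lambda>j. iter f (l-1) (f j)) [l..<l+k+1] @ [iter f (l-1) psi]) x t
           / (1 + pinv (mulf (iter f (l-1) (f l)) (iter f (l-1) (f l))) x t)"
      unfolding eq3 eq4 hh
    proof (rule W2_step[OF D])
      show "G @ [iter f l0 psi] \<noteq> []" by simp
      fix a b assume ab: "a \<in> set (G @ [iter f l0 psi])" "b \<in> set (G @ [iter f l0 psi])"
      have GS2: "set (G @ [iter f l0 psi]) \<subseteq> S l0" using GS psiS by simp
      show "pinv (mulf (dstep h a) (dstep h b)) x t =
              pinv (mulf a b) x t - pinv (mulf h a) x t * pinv (mulf h b) x t / (1 + pinv (mulf h h) x t)"
        using ab GS2 by (intro idt) auto
    qed
  qed
qed

end
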